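(* For all integers $t\ge k$ and all $i$ with $0\le i\le\rho(m)-1$, \[ \mu_i\;\le\;\sum_{j=1}^{k} x^{\alpha_i}(t-j)\;\le\;1+\mu_i . \]
   Context: For $u\in\mathbb{R}$ let $\mathbf 1[u]=1$ if $u\ge 0$ and $\mathbf 1[u]=0$ if $u<0$. Let $m$ be a positive integer and let $\rho(m)$ denote the number of primes $p$ with $2m<p<3m$; assume $\rho(m)\ge 2$. List these primes as $p_0>p_1>\dots>p_{\rho(m)-1}$ and put $\alpha_i=3m-p_i$. Let $k=(6m-1)\rho(m)$, $\mu_i=\lfloor k/p_i\rfloor$, $\beta_i=k-p_i\mu_i$. Define weights $\bar a_j$, $1\le j\le k$: if $\rho(m)$ is even, $\bar a_j=2$ if $j=\ell p_i$ for some $i$ and some $\ell$ with $1\le \ell\le 3\rho(m)/2$, $\bar a_j=-2$ if $j=\ell p_i$ with $3\rho(m)/2<\ell\le 2\rho(m)$, and $\bar a_j=0$ otherwise; if $\rho(m)$ is odd, $\bar a_j=2$ if $j=\ell p_i$ with $1\le\ell\le (3\rho(m)-1)/2$, $\bar a_j=-2$ if $j=\ell p_i$ with $(3\rho(m)+1)/2\le \ell\le 2\rho(m)-2$, $\bar a_j=-1$ if $j=\ell p_i$ with $\ell\in\{2\rho(m)-1,2\rho(m)\}$, and $\bar a_j=0$ otherwise (well defined since the sets $\{\ell p_i:1\le\ell\le2\rho(m)\}$ are pairwise disjoint). Let $\bar\theta=2\rho(m)$. For each $i$ define $x^{\alpha_i}(t)$ for $0\le t\le k-1$ by $x^{\alpha_i}(t)=1$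 if $t=\beta_i+\ell p_i$ for some $0\le \ell\le\mu_i-1$ and $x^{\alpha_i}(t)=0$ otherwise, and for $t\ge k$ by $x^{\alpha_i}(t)=\mathbf 1\big[\sum_{j=1}^k \bar a_j x^{\alpha_i}(t-j)-\bar\theta\big]$. *)

theory Defs
  imports "HOL-Computational_Algebra.Primes"
begin

definition primes_between :: "nat \<Rightarrow> nat set" where
  "primes_between m = {p. prime p \<and> 2*m < p \<and> p < 3*m}"

definition rho :: "nat \<Rightarrow> nat" where
  "rho m = card (primes_between m)"

definition pr :: "nat \<Rightarrow> nat \<Rightarrow> nat" where
  "pr m i = rev (sorted_list_of_set (primes_between m)) ! i"

definition alpha :: "nat \<Rightarrow> nat \<Rightarrow> nat" where
  "alpha m i = 3*m - pr m i"

definition kk :: "nat \<Rightarrow> nat" where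
  "kk m = (6*m - 1) * rho m"

definition mu :: "nat \<Rightarrow> nat \<Rightarrow> nat" where
  "mu m i = kk m div pr m i"

definition beta :: "nat \<Rightarrow> nat \<Rightarrow> nat" where
  "beta m i = kk m - pr m i * mu m i"

definition mult_in :: "nat \<Rightarrow> nat \<Rightarrow> nat \<Rightarrow> nat \<Rightarrow> bool" where
  "mult_in m j lo hi = (\<exists>i<rho m. \<exists>l. lo \<le> l \<and> l \<le> hi \<and> j = l * pr m i)"

definition abar :: "nat \<Rightarrow> nat \<Rightarrow> int" where
  "abar m j =
    (if even (rho m) then
       (if mult_in m j 1 (3 * rho m div 2) then 2
        else if mult_in m j (3 * rho m div 2 + 1) (2 * rho m) then -2
        else 0)
     else
       (if mult_in m j 1 ((3 * rho m - 1) div 2) then 2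
        else if mult_in m j ((3 * rho m + 1) div 2) (2 * rho m - 2) then -2
        else if mult_in m j (2 * rho m - 1) (2 * rho m) then -1
        else 0))"

definition theta_bar :: "nat \<Rightarrow> int" where
  "theta_bar m = 2 * int (rho m)"

definition step :: "int \<Rightarrow> int" where
  "step u = (if u \<ge> 0 then 1 else 0)"

function xa :: "nat \<Rightarrow> nat \<Rightarrow> nat \<Rightarrow> int" where
  "xa m i t =
    (if t < kk m then
       (if (\<exists>l. l \<le> mu m i - 1 \<and> mu m i \<ge> 1 \<and> t = beta m i + l * pr m i) then 1 else 0)
     else step ((\<Sum>j = 1..kk m. abar m j * xa m i (t - j)) - theta_bar m))"
  by pat_completeness auto
termination
  by (relation "measure (\<lambda>(m, i, t). t)") auto

end

theory Submission
  imports Defs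
begin

declare xa.simps[simp del]

lemma finite_PB: "finite (primes_between m)"
  unfolding primes_between_def by (rule finite_subset[of _ "{..<3*m}"]) auto

lemma PB_mem: "q \<in> primes_between m \<Longrightarrow> prime q \<and> 2*m < q \<and> q < 3*m"
  unfolding primes_between_def by auto

lemma rho_le: "rho m \<le> m - 1"
proof -
  have "primes_between m \<subseteq> {2*m+1..<3*m}" unfolding primes_between_def by auto
  hence "rho m \<le> card {2*m+1..<3*m}" unfolding rho_def by (rule card_mono[rotated]) simp
  thus ?thesis by simp
qed

lemma two_rho_less: "q \<in> primes_between m \<Longrightarrow> 2 * rho m < q"
  using rho_le[of m] PB_mem[of q m] by (cases m) auto

lemma pr_props:
  assumes "i < rho m"
  shows "pr m i \<in> primes_between m"
proof -
  let ?xs = "rev (sorted_list_of_set (primes_between m))"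
  have len: "length ?xs = rho m" unfolding rho_def by simp
  have "?xs ! i \<in> set ?xs" using assms len by (intro nth_mem) simp
  thus ?thesis unfolding pr_def using finite_PB by simp
qed

lemma pr_surj: "q \<in> primes_between m \<Longrightarrow> \<exists>i<rho m. pr m i = q"
proof -
  assume q: "q \<in> primes_between m"
  let ?xs = "rev (sorted_list_of_set (primes_between m))"
  have len: "length ?xs = rho m" unfolding rho_def by simp
  have "q \<in> set ?xs" using q finite_PB by simp
  then obtain i where "i < length ?xs" "?xs ! i = q" unfolding in_set_conv_nth by blast
  thus ?thesis using len unfolding pr_def by auto
qed

lemma mult_in_iff: "mult_in m j lo hi \<longleftrightarrow> (\<exists>q\<in>primes_between m. \<exists>l. lo \<le> l \<and> l \<le> hi \<and> j = l * q)"
  unfolding mult_in_def using pr_props pr_surj by metis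

lemma uniq:
  assumes q: "q \<in> primes_between m" and q': "q' \<in> primes_between m" and l: "1 \<le> l" "l \<le> 2*rho m"
    and l': "1 \<le> l'" "l' \<le> 2 * rho m" and eq: "l*q = l'*q'"
  shows "q = q' \<and> l = l'"
proof (cases "q = q'")
  case True
  with eq PB_mem[OF q] show ?thesis by auto
next
  case False
  have pq: "prime q" "prime q'" using q q' PB_mem by auto
  have "q dvd l' * q'" using eq by (metis dvd_triv_right)
  moreover have "\<not> q dvd q'" using pq False primes_dvd_imp_eq by blast
  ultimately have "q dvd l'" using pq prime_dvd_mult_iff by blast
  hence "q \<le> l'" using l' by (intro dvd_imp_le) auto
  moreover have "2*rho m < q" using two_rho_less[OF q] .
  ultimately show ?thesis using l' by linarith
qed

definition wt :: "nat \<Rightarrow> nat \<Rightarrow> int" where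
"wt m l = (if even (rho m) then
       (if 1 \<le> l \<and> l \<le> 3 * rho m div 2 then 2
        else if 3 * rho m div 2 + 1 \<le> l \<and> l \<le> 2 * rho m then -2 else 0)
     else
       (if 1 \<le> l \<and> l \<le> (3 * rho m - 1) div 2 then 2
        else if (3 * rho m + 1) div 2 \<le> l \<and> l \<le> 2 * rho m - 2 then -2
        else if 2 * rho m - 1 \<le> l \<and> l \<le> 2 * rho m then -1
        else 0))"

lemma abar_eq:
  assumes q: "q \<in> primes_between m" and l: "1 \<le> l" "l \<le> 2*rho m" and rho: "rho m \<ge> 1"
  shows "abar m (l*q) = wt m l"
proof -
  have key: "mult_in m (l*q) lo hi \<longleftrightarrow> lo \<le> l \<and> l \<le> hi" if "1 \<le> lo" "hi \<le> 2*rho m" for lo hi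
  proof
    assume "mult_in m (l*q) lo hi"
    then obtain q' l' where "q' \<in> primes_between m" "lo \<le> l'" "l' \<le> hi" "l*q = l'*q'" by (auto simp: mult_in_iff)
    with uniq[OF q this(1), of l l'] l that show "lo \<le> l \<and> l \<le> hi" by auto
  next
    assume "lo \<le> l \<and> l \<le> hi" thus "mult_in m (l*q) lo hi" using q by (auto simp: mult_in_iff)
  qed
  have k1: "mult_in m (l*q) 1 (3 * rho m div 2) \<longleftrightarrow> 1 \<le> l \<and> l \<le> 3 * rho m div 2"
    by (rule key) (use rho in presburger)+
  have k2: "mult_in m (l*q) (3 * rho m div 2 + 1) (2 * rho m) \<longleftrightarrow> 3 * rho m div 2 + 1 \<le> l \<and> l \<le> 2 * rho m"
    by (rule key) (use rho in presburger)+
  have k3: "mult_in m (l*q) 1 ((3 * rho m - 1) div 2) \<longleftrightarrow> 1 \<le> l \<and> l \<le> (3 * rho m - 1) div 2"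
    by (rule key) (use rho in presburger)+
  have k4: "mult_in m (l*q) ((3 * rho m + 1) div 2) (2 * rho m - 2) \<longleftrightarrow> (3 * rho m + 1) div 2 \<le> l \<and> l \<le> 2 * rho m - 2"
    by (rule key) (use rho in presburger)+
  have k5: "mult_in m (l*q) (2 * rho m - 1) (2 * rho m) \<longleftrightarrow> 2 * rho m - 1 \<le> l \<and> l \<le> 2 * rho m"
    by (rule key) (use rho in presburger)+
  show ?thesis unfolding abar_def wt_def by (simp only: k1 k2 k3 k4 k5)
qed

lemma abar_zero:
  assumes nz: "\<not> (\<exists>q\<in>primes_between m. \<exists>l. 1 \<le> l \<and> l \<le> 2*rho m \<and> j = l*q)" and rho: "rho m \<ge> 1"
  shows "abar m j = 0"
proof -
  have key: "\<not> mult_in m j lo hi" if "1 \<le> lo" "hi \<le> 2*rho m" for lo hi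
  proof
    assume "mult_in m j lo hi"
    then obtain q l where "q \<in> primes_between m" "lo \<le> l" "l \<le> hi" "j = l*q" unfolding mult_in_iff by blast
    moreover have "1 \<le> l" "l \<le> 2*rho m" using that \<open>lo \<le> l\<close> \<open>l \<le> hi\<close> by linarith+
    ultimately show False using nz by blast
  qed
  have k1: "\<not> mult_in m j 1 (3 * rho m div 2)"
    by (rule key) (use rho in presburger)+
  have k2: "\<not> mult_in m j (3 * rho m div 2 + 1) (2 * rho m)"
    by (rule key) (use rho in presburger)+
  have k3: "\<not> mult_in m j 1 ((3 * rho m - 1) div 2)"
    by (rule key) (use rho in presburger)+
  have k4: "\<not> mult_in m j ((3 * rho m + 1) div 2) (2 * rho m - 2)"
    by (rule key) (use rho in presburger)+
  have k5: "\<not> mult_in m j (2 * rho m - 1) (2 * rho m)"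
    by (rule key) (use rho in presburger)+
  show ?thesis unfolding abar_def by (simp only: k1 k2 k3 k4 k5 if_False if_cancel)
qed

lemma split_ival: "b \<le> n \<Longrightarrow> sum f {1..n} = sum f {1..b} + sum f {b+1..(n::nat)}"
  using sum.ub_add_nat[of 1 b f "n - b"] by simp

lemma wt_sum: assumes "rho m \<ge> 2" shows "(\<Sum>l=1..2*rho m. wt m l) = 2 * int (rho m)"
proof (cases "even (rho m)")
  case True
  then obtain r where r: "rho m = 2*r" by auto
  have "(\<Sum>l=1..2*rho m. wt m l) = (\<Sum>l=1..3*r. wt m l) + (\<Sum>l=3*r+1..4*r. wt m l)"
    using split_ival[of "3*r" "2*rho m"] r by simp
  also have "(\<Sum>l=1..3*r. wt m l) = (\<Sum>l=1..3*r. 2)"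
    by (rule sum.cong) (auto simp: wt_def r)
  also have "(\<Sum>l=3*r+1..4*r. wt m l) = (\<Sum>l=3*r+1..4*r. -2)"
    by (rule sum.cong) (auto simp: wt_def r)
  finally show ?thesis using r by simp
next
  case False
  then obtain r where r: "rho m = 2*r+1" using oddE by blast
  with assms have r1: "r \<ge> 1" by simp
  have r2: "2*rho m = 4*r+2" using r by simp
  have "(\<Sum>l=1..2*rho m. wt m l) = (\<Sum>l=1..3*r+1. wt m l) + (\<Sum>l=3*r+1+1..4*r+2. wt m l)"
    unfolding r2 by (rule split_ival) simp
  also have "(\<Sum>l=3*r+1+1..4*r+2. wt m l) = (\<Sum>l=3*r+1+1..4*r. wt m l) + (\<Sum>l=4*r+1..4*r+2. wt m l)"
    by (rule sum.ub_add_nat) (use r1 in simp)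
  also have "(\<Sum>l=1..3*r+1. wt m l) = (\<Sum>l=1..3*r+1. 2)"
    by (rule sum.cong) (use r1 in \<open>auto simp: wt_def r\<close>)
  also have "(\<Sum>l=3*r+1+1..4*r. wt m l) = (\<Sum>l=3*r+1+1..4*r. -2)"
    by (rule sum.cong) (use r1 in \<open>auto simp: wt_def r\<close>)
  also have "(\<Sum>l=4*r+1..4*r+2. wt m l) = (\<Sum>l=4*r+1..4*r+2. -1)"
    by (rule sum.cong) (use r1 in \<open>auto simp: wt_def r\<close>)
  finally show ?thesis using r r1 by (simp add: of_nat_diff)
qed


lemma sum_ind: "finite A \<Longrightarrow> (\<Sum>x\<in>A. if P x then (1::int) else 0) = (\<Sum>x\<in>{x\<in>A. P x}. 1)"
  using sum.inter_filter[of A "\<lambda>_. (1::int)" P] by simp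

lemma res_eq:
  fixes x y p :: nat
  assumes "x \<le> y" "y < x + p" "x mod p = y mod p"
  shows "x = y"
proof (rule ccontr)
  assume ne: "x \<noteq> y"
  have "p dvd y - x" using mod_eq_dvd_iff_nat[of x y p] assms by simp
  then have "p \<le> y - x" using ne assms by (intro dvd_imp_le) auto
  thus False using assms by linarith
qed

lemma card_res_le1:
  fixes S :: "nat set"
  assumes sub: "S \<subseteq> {a..<a+p}" and res: "\<And>s. s \<in> S \<Longrightarrow> s mod p = r"
  shows "card S \<le> 1"
proof -
  have fin: "finite S" using sub finite_subset by blast
  have "x = y" if "x \<in> S" "y \<in> S" for x y
  proof (cases "x \<le> y")
    case True
    have "x \<in> {a..<a+p}" "y \<in> {a..<a+p}" using sub that by auto
    hence "y < x + p" by simp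
    thus ?thesis using res_eq[of x y p] that res True by simp
  next
    case False
    have "x \<in> {a..<a+p}" "y \<in> {a..<a+p}" using sub that by auto
    hence "x < y + p" by simp
    thus ?thesis using res_eq[of y x p] that res False by simp
  qed
  thus ?thesis using card_le_Suc0_iff_eq[OF fin] by auto
qed

lemma card_res_block:
  fixes b p r :: nat
  assumes "r < p"
  shows "card {s\<in>{b..<b+p}. s mod p = r} = 1"
proof -
  define c where "c = (if b mod p \<le> r then b div p else b div p + 1)"
  define s0 where "s0 = r + c * p"
  have bd: "b = b div p * p + b mod p" by simp
  have bm: "b mod p < p" using assms by simp
  have s0m: "s0 mod p = r" using assms unfolding s0_def by (metis mod_mult_self1 mod_less)
  have s0i: "s0 \<in> {b..<b+p}"
  proof (cases "b mod p \<le> r")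
    case True
    then have c: "c*p = b div p * p" unfolding c_def by simp
    show ?thesis unfolding s0_def atLeastLessThan_iff using bd bm True assms c by linarith
  next
    case False
    then have c: "c*p = b div p * p + p" unfolding c_def by simp
    show ?thesis unfolding s0_def atLeastLessThan_iff using bd bm False assms c by linarith
  qed
  have "{s\<in>{b..<b+p}. s mod p = r} = {s0}"
  proof (intro equalityI subsetI)
    fix s assume "s \<in> {s\<in>{b..<b+p}. s mod p = r}"
    hence s: "s \<in> {b..<b+p}" "s mod p = r" by auto
    have "s = s0"
    proof (cases "s \<le> s0")
      case True thus ?thesis using res_eq[of s s0 p] s s0i s0m by auto
    next
      case False thus ?thesis using res_eq[of s0 s p] s s0i s0m by auto
    qed
    thus "s \<in> {s0}" by simp
  next
    fix s assume "s \<in> {s0}" thus "s \<in> {s\<in>{b..<b+p}. s mod p = r}" using s0i s0m by simp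
  qed
  thus ?thesis by simp
qed

lemma card_res_ival:
  fixes a p r n :: nat
  assumes "r < p"
  shows "card {s\<in>{a..<a+(q*p+n)}. s mod p = r} = q + card {s\<in>{a..<a+n}. s mod p = r}"
proof (induction q)
  case 0 thus ?case by simp
next
  case (Suc q)
  have eq: "{s\<in>{a..<a+(Suc q*p+n)}. s mod p = r} =
     {s\<in>{a..<a+(q*p+n)}. s mod p = r} \<union> {s\<in>{a+(q*p+n)..<a+(q*p+n)+p}. s mod p = r}"
    by (auto simp: algebra_simps)
  have "card {s\<in>{a..<a+(Suc q*p+n)}. s mod p = r} =
     card {s\<in>{a..<a+(q*p+n)}. s mod p = r} + card {s\<in>{a+(q*p+n)..<a+(q*p+n)+p}. s mod p = r}"
    unfolding eq by (rule card_Un_disjoint) auto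
  thus ?case using Suc card_res_block[OF assms, of "a+(q*p+n)"] by simp
qed

lemma hit_uniq:
  fixes p q t l1 l2 N :: nat
  assumes pq: "prime p" "prime q" "p \<noteq> q" and N: "N < p" and l: "l1 < l2" "l2 \<le> N" "l2*q \<le> t"
    and md: "(t - l1*q) mod p = (t - l2*q) mod p"
  shows False
proof -
  have le: "l1*q \<le> l2*q" using l by simp
  have le2: "t - l2*q \<le> t - l1*q" using le by (rule diff_le_mono2)
  have "p dvd (t - l1*q) - (t - l2*q)" using mod_eq_dvd_iff_nat[OF le2] md by blast
  moreover have "(t - l1*q) - (t - l2*q) = (l2 - l1)*q" using le l by (simp add: diff_mult_distrib)
  ultimately have "p dvd (l2 - l1) * q" by simp
  moreover have "\<not> p dvd q" using pq primes_dvd_imp_eq by blast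
  ultimately have "p dvd l2 - l1" using pq prime_dvd_mult_iff by blast
  hence "p \<le> l2 - l1" using l by (intro dvd_imp_le) auto
  thus False using l N by linarith
qed

lemma kk_bound:
  assumes "q \<in> primes_between m"
  shows "2 * rho m * q \<le> kk m"
proof -
  have "2*q \<le> 6*m - 1" using PB_mem[OF assms] by linarith
  hence "rho m * (2*q) \<le> rho m * (6*m-1)" by (rule mult_le_mono2)
  thus ?thesis unfolding kk_def by (simp add: algebra_simps)
qed

lemma wt_le2: "wt m l \<le> 2" unfolding wt_def by auto

lemma S_val:
  fixes b p t m :: nat
  assumes rho: "rho m \<ge> 2" and pP: "p \<in> primes_between m" and t: "kk m \<le> t"
  defines "X \<equiv> (\<lambda>s::nat. if s mod p = b then (1::int) else 0)"
  shows "(t mod p = b \<longrightarrow> (\<Sum>j=1..kk m. abar m j * X (t - j)) = 2 * int (rho m)) \<and>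
         (t mod p \<noteq> b \<longrightarrow> (\<Sum>j=1..kk m. abar m j * X (t - j)) < 2 * int (rho m))"
proof -
  define P where "P = primes_between m"
  define L where "L = {1..2*rho m}"
  define h where "h = (\<lambda>(q::nat,l::nat). l*q)"
  define D where "D = h ` (P \<times> L)"
  have finP: "finite P" unfolding P_def by (rule finite_PB)
  have rho1: "rho m \<ge> 1" using rho by simp
  have Dsub: "D \<subseteq> {1..kk m}"
  proof
    fix j assume "j \<in> D"
    then obtain q l where ql: "q \<in> P" "l \<in> L" "j = l*q" unfolding D_def h_def by auto
    have "l*q \<le> 2*rho m*q" using ql unfolding L_def by simp
    also have "\<dots> \<le> kk m" using kk_bound ql unfolding P_def by blast
    finally have "l*q \<le> kk m" .
    moreover have "1 \<le> l" "1 \<le> q" using ql PB_mem[of q m] unfolding L_def P_def by auto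
    ultimately show "j \<in> {1..kk m}" using ql by simp
  qed
  have "(\<Sum>j=1..kk m. abar m j * X (t - j)) = (\<Sum>j\<in>D. abar m j * X (t - j))"
  proof (rule sum.mono_neutral_right[symmetric, THEN sym])
    show "finite {1..kk m}" by simp
    show "D \<subseteq> {1..kk m}" by (rule Dsub)
    show "\<forall>j\<in>{1..kk m} - D. abar m j * X (t - j) = 0"
    proof
      fix j assume j: "j \<in> {1..kk m} - D"
      have "\<not> (\<exists>q\<in>primes_between m. \<exists>l. 1 \<le> l \<and> l \<le> 2*rho m \<and> j = l*q)"
        using j unfolding D_def h_def P_def L_def by force
      thus "abar m j * X (t - j) = 0" using abar_zero rho1 by simp
    qed
  qed
  also have "\<dots> = (\<Sum>x\<in>P \<times> L. abar m (h x) * X (t - h x))"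
  proof -
    have "inj_on h (P \<times> L)"
    proof (rule inj_onI)
      fix x y assume xy: "x \<in> P \<times> L" "y \<in> P \<times> L" "h x = h y"
      obtain q l q' l' where e: "x = (q,l)" "y = (q',l')" by (cases x, cases y) blast
      have "q \<in> primes_between m" "q' \<in> primes_between m" "1 \<le> l" "l \<le> 2*rho m" "1 \<le> l'" "l' \<le> 2*rho m"
        "l*q = l'*q'" using xy unfolding e h_def P_def L_def by auto
      from uniq[OF this] show "x = y" unfolding e by simp
    qed
    thus ?thesis unfolding D_def by (simp add: sum.reindex)
  qed
  also have "\<dots> = (\<Sum>(q,l)\<in>P \<times> L. wt m l * X (t - l*q))"
    by (rule sum.cong) (auto simp: h_def P_def L_def abar_eq rho1)
  also have "\<dots> = (\<Sum>q\<in>P. \<Sum>l\<in>L. wt m l * X (t - l*q))"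
    by (rule sum.cartesian_product[symmetric])
  also have "\<dots> = (\<Sum>l\<in>L. wt m l * X (t - l*p)) + (\<Sum>q\<in>P-{p}. \<Sum>l\<in>L. wt m l * X (t - l*q))"
    using finP pP unfolding P_def by (simp add: sum.remove)
  also have "(\<Sum>l\<in>L. wt m l * X (t - l*p)) = X t * (2 * int (rho m))"
  proof -
    have "(\<Sum>l\<in>L. wt m l * X (t - l*p)) = (\<Sum>l\<in>L. wt m l * X t)"
    proof (rule sum.cong)
      fix l assume l: "l \<in> L"
      have "l*p \<le> 2*rho m*p" using l unfolding L_def by simp
      also have "\<dots> \<le> t" using kk_bound[OF pP] t by linarith
      finally have "t = (t - l*p) + l*p" by simp
      hence "t mod p = (t - l*p) mod p" by (metis mod_mult_self1 mult.commute)
      thus "wt m l * X (t - l*p) = wt m l * X t" unfolding X_def by simp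
    qed simp
    also have "\<dots> = X t * (\<Sum>l\<in>L. wt m l)" by (subst sum_distrib_left) (simp add: mult.commute)
    finally show ?thesis using wt_sum[OF rho] unfolding L_def by simp
  qed
  finally have S: "(\<Sum>j=1..kk m. abar m j * X (t - j)) = X t * (2 * int (rho m)) + (\<Sum>q\<in>P-{p}. \<Sum>l\<in>L. wt m l * X (t - l*q))" .
  have pprime: "prime p" and p2: "2 * rho m < p" using PB_mem[OF pP] two_rho_less[OF pP] by auto
  have qfacts: "prime q" "q \<noteq> p" "\<And>l. l \<in> L \<Longrightarrow> l*q \<le> t" if "q \<in> P - {p}" for q
  proof -
    show "prime q" "q \<noteq> p" using that PB_mem unfolding P_def by auto
    fix l assume "l \<in> L"
    hence "l*q \<le> 2*rho m*q" unfolding L_def by simp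
    also have "\<dots> \<le> t" using kk_bound[of q m] that t unfolding P_def by auto
    finally show "l*q \<le> t" .
  qed
  show ?thesis
  proof (intro conjI impI)
    assume tb: "t mod p = b"
    have "(\<Sum>l\<in>L. wt m l * X (t - l*q)) = 0" if q: "q \<in> P - {p}" for q
    proof (rule sum.neutral, rule ballI)
      fix l assume l: "l \<in> L"
      have "X (t - l*q) = 0"
      proof (rule ccontr)
        assume "X (t - l*q) \<noteq> 0"
        hence "(t - 0*q) mod p = (t - l*q) mod p" using tb unfolding X_def by (auto split: if_splits)
        thus False using hit_uniq[OF pprime qfacts(1)[OF q] qfacts(2)[OF q, symmetric] p2, of 0 l t]
            l qfacts(3)[OF q l] unfolding L_def by auto
      qed
      thus "wt m l * X (t - l*q) = 0" by simp
    qed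
    hence "(\<Sum>q\<in>P-{p}. \<Sum>l\<in>L. wt m l * X (t - l*q)) = 0" by simp
    thus "(\<Sum>j=1..kk m. abar m j * X (t - j)) = 2 * int (rho m)" using S tb unfolding X_def by simp
  next
    assume tb: "t mod p \<noteq> b"
    have inner: "(\<Sum>l\<in>L. wt m l * X (t - l*q)) \<le> 2" if q: "q \<in> P - {p}" for q
    proof -
      have "(\<Sum>l\<in>L. wt m l * X (t - l*q)) \<le> (\<Sum>l\<in>L. 2 * X (t - l*q))"
        by (rule sum_mono) (rule mult_right_mono[OF wt_le2], simp add: X_def)
      also have "\<dots> = 2 * (\<Sum>l\<in>{l\<in>L. (t - l*q) mod p = b}. 1)"
        unfolding X_def sum_distrib_left[symmetric] by (subst sum_ind) (simp_all add: L_def)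
      also have "\<dots> = 2 * int (card {l\<in>L. (t - l*q) mod p = b})" by simp
      also have "card {l\<in>L. (t - l*q) mod p = b} \<le> 1"
      proof -
        have fin: "finite {l\<in>L. (t - l*q) mod p = b}" unfolding L_def by simp
        have xy: "x = y" if "x \<in> {l\<in>L. (t - l*q) mod p = b}" "y \<in> {l\<in>L. (t - l*q) mod p = b}" for x y
        proof (rule linorder_cases[of x y])
          assume "x < y"
          thus ?thesis using hit_uniq[OF pprime qfacts(1)[OF q] qfacts(2)[OF q, symmetric] p2, of x y t]
              that qfacts(3)[OF q] unfolding L_def by auto
        next
          assume "y < x"
          thus ?thesis using hit_uniq[OF pprime qfacts(1)[OF q] qfacts(2)[OF q, symmetric] p2, of y x t]
              that qfacts(3)[OF q] unfolding L_def by auto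
        qed
        show ?thesis unfolding One_nat_def card_le_Suc0_iff_eq[OF fin] using xy by blast
      qed
      finally show ?thesis by simp
    qed
    have "(\<Sum>q\<in>P-{p}. \<Sum>l\<in>L. wt m l * X (t - l*q)) \<le> of_nat (card (P - {p})) * 2"
      by (rule sum_bounded_above) (rule inner)
    also have "card (P - {p}) = rho m - 1" using pP finP unfolding P_def rho_def by simp
    finally have "(\<Sum>q\<in>P-{p}. \<Sum>l\<in>L. wt m l * X (t - l*q)) \<le> int (rho m - 1) * 2" .
    thus "(\<Sum>j=1..kk m. abar m j * X (t - j)) < 2 * int (rho m)" using S tb rho1 unfolding X_def
      by (simp add: of_nat_diff)
  qed
qed


lemma basic:
  assumes rho: "rho m \<ge> 2" and i: "i < rho m"
  shows "pr m i \<in> primes_between m" "pr m i > 0" "beta m i < pr m i"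
    "kk m = mu m i * pr m i + beta m i" "mu m i \<ge> 1"
proof -
  show pP: "pr m i \<in> primes_between m" using pr_props i .
  show ppos: "pr m i > 0" using PB_mem[OF pP] prime_gt_0_nat by blast
  have beta: "beta m i = kk m mod pr m i" unfolding beta_def mu_def by (rule minus_mult_div_eq_mod)
  show "beta m i < pr m i" using beta ppos by simp
  show "kk m = mu m i * pr m i + beta m i" unfolding beta mu_def by (simp only: div_mult_mod_eq)
  have "2 * rho m * pr m i \<le> kk m" by (rule kk_bound[OF pP])
  moreover have "pr m i \<le> 2 * rho m * pr m i" using rho by simp
  ultimately have kp: "pr m i \<le> kk m" by linarith
  have "pr m i div pr m i \<le> kk m div pr m i" by (rule div_le_mono[OF kp])
  thus "mu m i \<ge> 1" unfolding mu_def using ppos by simp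
qed

lemma periodic:
  assumes rho: "rho m \<ge> 2" and i: "i < rho m"
  shows "xa m i t = (if t mod pr m i = beta m i then 1 else 0)"
proof -
  note B = basic[OF rho i]
  define p where "p = pr m i"
  have pP: "p \<in> primes_between m" and ppos: "p > 0" and bp: "beta m i < p"
    and kdec: "kk m = mu m i * p + beta m i" and mu1: "mu m i \<ge> 1" using B unfolding p_def by auto
  have kpos: "kk m > 0" using kdec mu1 ppos by (metis add_gr_0 mult_pos_pos less_le_trans zero_less_one)
  show ?thesis unfolding p_def[symmetric]
  proof (induction t rule: less_induct)
    case (less t)
    show ?case
    proof (cases "t < kk m")
      case True
      have xt: "xa m i t = (if (\<exists>l. l \<le> mu m i - 1 \<and> mu m i \<ge> 1 \<and> t = beta m i + l * p) then 1 else 0)"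
        unfolding p_def using True by (subst xa.simps[of m i t]) (simp del: xa.simps)
      have iff: "(\<exists>l. l \<le> mu m i - 1 \<and> mu m i \<ge> 1 \<and> t = beta m i + l*p) \<longleftrightarrow> t mod p = beta m i"
      proof
        assume "\<exists>l. l \<le> mu m i - 1 \<and> mu m i \<ge> 1 \<and> t = beta m i + l*p"
        then obtain l where "t = beta m i + l*p" by blast
        thus "t mod p = beta m i" using bp by simp
      next
        assume tm: "t mod p = beta m i"
        have td: "t = beta m i + t div p * p" using tm div_mult_mod_eq[of t p] by simp
        have "t div p * p < mu m i * p" using True td kdec by linarith
        hence "t div p < mu m i" by simp
        thus "\<exists>l. l \<le> mu m i - 1 \<and> mu m i \<ge> 1 \<and> t = beta m i + l*p" using td mu1
          by (intro exI[of _ "t div p"]) auto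
      qed
      show ?thesis using xt iff by simp
    next
      case False
      have xt: "xa m i t = step ((\<Sum>j=1..kk m. abar m j * xa m i (t - j)) - theta_bar m)"
        using False by (subst xa.simps[of m i t]) (simp del: xa.simps)
      have "(\<Sum>j=1..kk m. abar m j * xa m i (t - j)) =
            (\<Sum>j=1..kk m. abar m j * (if (t - j) mod p = beta m i then 1 else 0))"
      proof (rule sum.cong)
        fix j assume "j \<in> {1..kk m}"
        hence "t - j < t" using False kpos by auto
        thus "abar m j * xa m i (t - j) = abar m j * (if (t - j) mod p = beta m i then 1 else 0)"
          using less.IH by simp
      qed simp
      moreover have "kk m \<le> t" using False by simp
      note SV = S_val[OF rho pP this, of "beta m i"]
      ultimately show ?thesis using xt SV unfolding step_def theta_bar_def by auto
    qed
  qed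
qed

theorem lemma8:
  fixes m :: nat
  assumes "m \<ge> 1" and "rho m \<ge> 2"
  shows "\<forall>t i. t \<ge> kk m \<longrightarrow> i \<le> rho m - 1 \<longrightarrow>
           int (mu m i) \<le> (\<Sum>j = 1..kk m. xa m i (t - j)) \<and>
           (\<Sum>j = 1..kk m. xa m i (t - j)) \<le> 1 + int (mu m i)"
proof (intro allI impI)
  fix t i assume t: "kk m \<le> t" and i: "i \<le> rho m - 1"
  have ii: "i < rho m" using i assms by linarith
  note B = basic[OF assms(2) ii]
  define p where "p = pr m i"
  define b where "b = beta m i"
  define mu' where "mu' = mu m i"
  have ppos: "p > 0" and bp: "b < p" and kdec: "kk m = mu' * p + b"
    using B unfolding p_def b_def mu'_def by auto
  define A where "A = {j\<in>{1..kk m}. (t - j) mod p = b}"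
  have "(\<Sum>j = 1..kk m. xa m i (t - j)) = (\<Sum>j = 1..kk m. if (t - j) mod p = b then (1::int) else 0)"
    by (rule sum.cong) (simp_all add: periodic[OF assms(2) ii] p_def b_def)
  also have "\<dots> = int (card A)" unfolding A_def by (subst sum_ind) simp_all
  finally have sumeq: "(\<Sum>j = 1..kk m. xa m i (t - j)) = int (card A)" .
  define a where "a = t - kk m"
  have ta: "t = a + (mu' * p + b)" using t kdec unfolding a_def by simp
  have Aim: "A = (\<lambda>s. t - s) ` {s\<in>{a..<a+(mu'*p+b)}. s mod p = b}"
  proof (intro equalityI subsetI)
    fix j assume "j \<in> A"
    hence j: "1 \<le> j" "j \<le> kk m" "(t - j) mod p = b" unfolding A_def by auto
    show "j \<in> (\<lambda>s. t - s) ` {s\<in>{a..<a+(mu'*p+b)}. s mod p = b}"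
    proof (rule image_eqI[of _ _ "t - j"])
      show "j = t - (t - j)" using j t by simp
      show "t - j \<in> {s\<in>{a..<a+(mu'*p+b)}. s mod p = b}" using j t ta kdec unfolding a_def by auto
    qed
  next
    fix j assume "j \<in> (\<lambda>s. t - s) ` {s\<in>{a..<a+(mu'*p+b)}. s mod p = b}"
    then obtain s where s: "j = t - s" "a \<le> s" "s < a + (mu'*p+b)" "s mod p = b" by auto
    have "t - j = s" using s ta by simp
    thus "j \<in> A" unfolding A_def using s ta kdec unfolding a_def by auto
  qed
  have inj: "inj_on (\<lambda>s. t - s) {s\<in>{a..<a+(mu'*p+b)}. s mod p = b}"
    by (rule inj_onI) (use ta in auto)
  have cA: "card A = mu' + card {s\<in>{a..<a+b}. s mod p = b}"
    unfolding Aim card_image[OF inj] by (rule card_res_ival[OF bp])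
  have "card {s\<in>{a..<a+b}. s mod p = b} \<le> 1"
    by (rule card_res_le1[of _ a p b]) (use bp in auto)
  thus "int (mu m i) \<le> (\<Sum>j = 1..kk m. xa m i (t - j)) \<and>
           (\<Sum>j = 1..kk m. xa m i (t - j)) \<le> 1 + int (mu m i)"
    unfolding sumeq cA mu'_def[symmetric] by simp
qed

end
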